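(* For every even integer $n\ge 6$ there exists an $n$-intersection polished graph with exactly $n^2/4+3n/2$ vertices that has at least $2^{n/2}$ maximal cliques. Consequently, there is an infinite family of graphs $G$, each $k$-intersection polished for a suitable $k$ depending on $G$, whose number of maximal cliques is exponential in $\sqrt{|V(G)|}$.
   Context: All graphs are finite and simple. For a vertex $v$, $N[v]$ denotes its closed neighbourhood (the set of neighbours of $v$ together with $v$). For an integer $k$, $P^k(G)$ is the graph on the same vertex set as $G$ in which two distinct vertices $u,v$ are adjacent if and only if $|N[u]\cap N[v]|\ge k$, the closed neighbourhoods being taken in $G$. A graph $G$ is called $k$-intersection polished if $P^k(G)=G$. A clique is a set of pairwise adjacent vertices; it is maximal if it is not properly contained in another clique. *)

theory Defs
  imports Main
begin

definition simple_graph :: "'a set \<Rightarrow> ('a \<Rightarrow> 'a \<Rightarrow> bool) \<Rightarrow> bool" where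
  "simple_graph V E \<longleftrightarrow> finite V \<and>
     (\<forall>u v. E u v \<longrightarrow> u \<in> V \<and> v \<in> V) \<and>
     (\<forall>u v. E u v \<longrightarrow> E v u) \<and> (\<forall>v. \<not> E v v)"

definition closed_nbhd :: "'a set \<Rightarrow> ('a \<Rightarrow> 'a \<Rightarrow> bool) \<Rightarrow> 'a \<Rightarrow> 'a set" where
  "closed_nbhd V E v = insert v {u \<in> V. E v u}"

definition Pk_adj :: "nat \<Rightarrow> 'a set \<Rightarrow> ('a \<Rightarrow> 'a \<Rightarrow> bool) \<Rightarrow> 'a \<Rightarrow> 'a \<Rightarrow> bool" where
  "Pk_adj k V E u v \<longleftrightarrow> u \<in> V \<and> v \<in> V \<and> u \<noteq> v \<and>
     card (closed_nbhd V E u \<inter> closed_nbhd V E v) \<ge> k"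

definition intersection_polished :: "nat \<Rightarrow> 'a set \<Rightarrow> ('a \<Rightarrow> 'a \<Rightarrow> bool) \<Rightarrow> bool" where
  "intersection_polished k V E \<longleftrightarrow> Pk_adj k V E = E"

definition is_clique :: "'a set \<Rightarrow> ('a \<Rightarrow> 'a \<Rightarrow> bool) \<Rightarrow> 'a set \<Rightarrow> bool" where
  "is_clique V E C \<longleftrightarrow> C \<subseteq> V \<and> (\<forall>u\<in>C. \<forall>v\<in>C. u \<noteq> v \<longrightarrow> E u v)"

definition is_maximal_clique :: "'a set \<Rightarrow> ('a \<Rightarrow> 'a \<Rightarrow> bool) \<Rightarrow> 'a set \<Rightarrow> bool" where
  "is_maximal_clique V E C \<longleftrightarrow> is_clique V E C \<and> (\<nexists>D. is_clique V E D \<and> C \<subset> D)"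

end

theory Submission
  imports Defs "HOL-Library.Countable"
begin

datatype vert = Z | S bool nat bool | P nat

instance vert :: countable by countable_datatype

fun adj :: "vert \<Rightarrow> vert \<Rightarrow> bool" where
  "adj Z (S _ _ _) = True"
| "adj (S _ _ _) Z = True"
| "adj (S b i s) (S c j t) = (if b = c then i \<noteq> j else ((s = t) = (i \<noteq> j)))"
| "adj _ _ = False"

definition Side :: "nat \<Rightarrow> bool \<Rightarrow> vert set" where
  "Side m b = (\<lambda>(j,t). S b j t) ` ({..<m} \<times> UNIV)"

definition Tr :: "nat \<Rightarrow> bool \<Rightarrow> (nat \<Rightarrow> bool) \<Rightarrow> vert set" where
  "Tr m b f = (\<lambda>j. S b j (f j)) ` {..<m}"

definition VV :: "nat \<Rightarrow> vert set" where
  "VV m = insert Z (Side m True \<union> Side m False \<union> P ` {..<m*m - m - 1})"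

definition EE :: "nat \<Rightarrow> vert \<Rightarrow> vert \<Rightarrow> bool" where
  "EE m u v \<longleftrightarrow> u \<in> VV m \<and> v \<in> VV m \<and> adj u v"

lemma mem_Side[simp]: "x \<in> Side m b \<longleftrightarrow> (\<exists>j t. j < m \<and> x = S b j t)"
  unfolding Side_def by auto

lemma mem_Tr[simp]: "x \<in> Tr m b f \<longleftrightarrow> (\<exists>j. j < m \<and> x = S b j (f j))"
  unfolding Tr_def by auto

lemma card_Side: "card (Side m b) = 2 * m"
proof -
  have "inj_on (\<lambda>(j,t). S b j t) ({..<m} \<times> (UNIV::bool set))"
    by (auto simp: inj_on_def)
  then show ?thesis unfolding Side_def by (simp add: card_image card_cartesian_product)
qed

lemma finite_Side[simp]: "finite (Side m b)"
  unfolding Side_def by simp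

lemma card_Tr: "card (Tr m b f) = m"
proof -
  have "inj_on (\<lambda>j. S b j (f j)) {..<m}" by (auto simp: inj_on_def)
  then show ?thesis unfolding Tr_def by (simp add: card_image)
qed

lemma finite_Tr[simp]: "finite (Tr m b f)"
  unfolding Tr_def by simp

lemma mem_VV[simp]:
  "Z \<in> VV m" "S b i s \<in> VV m \<longleftrightarrow> i < m" "P j \<in> VV m \<longleftrightarrow> j < m*m - m - 1"
  unfolding VV_def by auto

lemma finite_VV[simp]: "finite (VV m)"
  unfolding VV_def by simp

lemma card_VV: assumes "m \<ge> 2" shows "card (VV m) = m*m + 3*m"
proof -
  have d1: "Side m True \<inter> Side m False = {}" by auto
  have d2: "(Side m True \<union> Side m False) \<inter> P ` {..<m*m - m - 1} = {}" by auto
  have "card (Side m True \<union> Side m False \<union> P ` {..<m*m - m - 1}) = 4*m + (m*m - m - 1)"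
    using d1 d2 by (simp add: card_Un_disjoint card_Side card_image inj_on_def)
  moreover have "Z \<notin> Side m True \<union> Side m False \<union> P ` {..<m*m - m - 1}" by auto
  moreover have "m*m \<ge> 2*m" using assms by (simp add: mult_right_mono)
  then have "m*m \<ge> m + 1" using assms by linarith
  ultimately show ?thesis unfolding VV_def by simp
qed


abbreviation NN :: "nat \<Rightarrow> vert \<Rightarrow> vert set" where
  "NN m v \<equiv> closed_nbhd (VV m) (EE m) v"

lemma mem_NN[simp]: "x \<in> NN m v \<longleftrightarrow> x = v \<or> (x \<in> VV m \<and> v \<in> VV m \<and> adj v x)"
  unfolding closed_nbhd_def EE_def by auto

lemma finite_NN[simp]: "finite (NN m v)"
  unfolding closed_nbhd_def by simp

lemma finite_NN_int[simp]: "finite (NN m u \<inter> NN m v)"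
  by simp

lemma card_Side_minus1: "x \<in> Side m b \<Longrightarrow> card (Side m b - {x}) = 2*m - 1"
  by (simp add: card_Side)

lemma card_Side_minus2: "x \<in> Side m b \<Longrightarrow> y \<in> Side m b \<Longrightarrow> x \<noteq> y \<Longrightarrow>
   card (Side m b - {x, y}) = 2*m - 2"
  by (subst card_Diff_subset) (auto simp: card_Side)

lemma card_Tr_minus1: "x \<in> Tr m b f \<Longrightarrow> card (Tr m b f - {x}) = m - 1"
  by (simp add: card_Tr)

lemma LA: assumes "i < m" shows "2*m \<le> card (NN m Z \<inter> NN m (S b i s))"
proof -
  let ?X = "insert Z (Side m b - {S b i (\<not>s)})"
  have sub: "?X \<subseteq> NN m Z \<inter> NN m (S b i s)" using assms by auto
  have "card ?X = Suc (card (Side m b - {S b i (\<not>s)}))"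
    by (rule card_insert_disjoint) auto
  also have "\<dots> = 2*m" using assms by (simp add: card_Side)
  finally have "card ?X = 2*m" .
  moreover have "card ?X \<le> card (NN m Z \<inter> NN m (S b i s))"
    by (rule card_mono[OF finite_NN_int sub])
  ultimately show ?thesis by simp
qed

lemma LB: assumes "i < m" "j < m" "i \<noteq> j" "m \<ge> 3"
  shows "2*m \<le> card (NN m (S b i s) \<inter> NN m (S b j t))"
proof -
  obtain k where k: "k < m" "k \<noteq> i" "k \<noteq> j"
  proof -
    have "\<exists>k<3. k \<noteq> i \<and> k \<noteq> j" by presburger
    then obtain k where "k < 3" "k \<noteq> i" "k \<noteq> j" by blast
    moreover from this(1) assms(4) have "k < m" by linarith
    ultimately show ?thesis using that by blast
  qed
  define w where "w = (if s = t then S (\<not>b) k s else S (\<not>b) i (\<not>s))"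
  let ?X = "insert Z (insert w (Side m b - {S b i (\<not>s), S b j (\<not>t)}))"
  have sub: "?X \<subseteq> NN m (S b i s) \<inter> NN m (S b j t)" using assms k
    unfolding w_def by auto
  have c1: "card ?X = Suc (card (insert w (Side m b - {S b i (\<not>s), S b j (\<not>t)})))"
    by (rule card_insert_disjoint) (auto simp: w_def)
  have c2: "card (insert w (Side m b - {S b i (\<not>s), S b j (\<not>t)})) = Suc (card (Side m b - {S b i (\<not>s), S b j (\<not>t)}))"
    by (rule card_insert_disjoint) (auto simp: w_def)
  have c3: "card (Side m b - {S b i (\<not>s), S b j (\<not>t)}) = 2*m - 2"
    using assms by (intro card_Side_minus2) auto
  have "card ?X = 2*m" using c1 c2 c3 assms by simp
  moreover have "card ?X \<le> card (NN m (S b i s) \<inter> NN m (S b j t))"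
    by (rule card_mono[OF finite_NN_int sub])
  ultimately show ?thesis by simp
qed

lemma LC: assumes "i < m" "k < m" "(s = t) = (i \<noteq> k)"
  shows "2*m \<le> card (NN m (S b i s) \<inter> NN m (S (\<not>b) k t))"
proof -
  define g where "g = (\<lambda>l. if l = k then \<not>t else t)"
  define f where "f = (\<lambda>l. if l = i then \<not>s else s)"
  let ?X = "Tr m b g \<union> Tr m (\<not>b) f"
  have sub: "?X \<subseteq> NN m (S b i s) \<inter> NN m (S (\<not>b) k t)" using assms
    unfolding g_def f_def by auto
  have "Tr m b g \<inter> Tr m (\<not>b) f = {}" by auto
  then have "card ?X = m + m" by (simp add: card_Un_disjoint card_Tr)
  moreover have "card ?X \<le> card (NN m (S b i s) \<inter> NN m (S (\<not>b) k t))"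
    by (rule card_mono[OF finite_NN_int sub])
  ultimately show ?thesis by simp
qed

lemma LD: assumes "u \<noteq> P j" shows "card (NN m u \<inter> NN m (P j)) = 0"
proof -
  have "NN m u \<inter> NN m (P j) = {}" using assms by (cases u) auto
  then show ?thesis by simp
qed

lemma LE: assumes "i < m" "s \<noteq> t"
  shows "card (NN m (S b i s) \<inter> NN m (S b i t)) < 2*m"
proof -
  let ?X = "insert Z (Side m b - {S b i s, S b i t})"
  have sub: "NN m (S b i s) \<inter> NN m (S b i t) \<subseteq> ?X"
    apply (rule subsetI)
    subgoal for x using assms by (cases x) (auto split: if_splits)
    done
  have c1: "card ?X = Suc (card (Side m b - {S b i s, S b i t}))"
    by (rule card_insert_disjoint) auto
  have c2: "card (Side m b - {S b i s, S b i t}) = 2*m - 2"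
    using assms by (intro card_Side_minus2) auto
  have "card ?X < 2*m" using c1 c2 assms by simp
  moreover have "card (NN m (S b i s) \<inter> NN m (S b i t)) \<le> card ?X"
    by (rule card_mono[OF _ sub]) (simp add: Side_def)
  ultimately show ?thesis by simp
qed

lemma LF: assumes "i < m" "k < m" "\<not> ((s = t) = (i \<noteq> k))"
  shows "card (NN m (S b i s) \<inter> NN m (S (\<not>b) k t)) < 2*m"
proof -
  define g where "g = (\<lambda>l. if l = k then \<not>t else t)"
  define f where "f = (\<lambda>l. if l = i then \<not>s else s)"
  let ?A = "Tr m b g - {S b i (\<not>s)}"
  let ?B = "Tr m (\<not>b) f - {S (\<not>b) k (\<not>t)}"
  let ?X = "insert Z (?A \<union> ?B)"
  have sub: "NN m (S b i s) \<inter> NN m (S (\<not>b) k t) \<subseteq> ?X"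
    apply (rule subsetI)
    subgoal for x using assms by (cases x) (auto simp: g_def f_def split: if_splits)
    done
  have inA: "S b i (\<not>s) \<in> Tr m b g" using assms unfolding g_def by auto
  have inB: "S (\<not>b) k (\<not>t) \<in> Tr m (\<not>b) f" using assms unfolding f_def by auto
  have "card ?X \<le> Suc (card (?A \<union> ?B))" by (simp add: card_insert_le_m1)
  also have "card (?A \<union> ?B) \<le> card ?A + card ?B" by (rule card_Un_le)
  also have "card ?A = m - 1" using inA by (rule card_Tr_minus1)
  also have "card ?B = m - 1" using inB by (rule card_Tr_minus1)
  finally have "card ?X \<le> Suc ((m - 1) + (m - 1))" by simp
  then have "card ?X < 2*m" using assms by simp
  moreover have "card (NN m (S b i s) \<inter> NN m (S (\<not>b) k t)) \<le> card ?X"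
    by (rule card_mono[OF _ sub]) simp
  ultimately show ?thesis by simp
qed


lemma key:
  assumes m3: "m \<ge> 3" and uv: "u \<in> VV m" "v \<in> VV m" "u \<noteq> v"
  shows "(2*m \<le> card (NN m u \<inter> NN m v)) = adj u v"
proof (cases u)
  case Z
  show ?thesis
  proof (cases v)
    case Z then show ?thesis using uv \<open>u = Z\<close> by simp
  next
    case (S b i s) then show ?thesis using uv \<open>u = Z\<close> LA[of i m b s] by simp
  next
    case (P j) then show ?thesis using uv \<open>u = Z\<close> m3 LD[of u j m] by simp
  qed
next
  case (S b i s)
  show ?thesis
  proof (cases v)
    case Z then show ?thesis using uv \<open>u = S b i s\<close> LA[of i m b s]
      by (simp add: Int_commute)
  next
    case (P j) then show ?thesis using uv \<open>u = S b i s\<close> m3 LD[of u j m] by simp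
  next
    case (S c j t)
    show ?thesis
    proof (cases "c = b")
      case True
      show ?thesis
      proof (cases "i = j")
        case True
        then have "s \<noteq> t" using uv \<open>u = S b i s\<close> \<open>v = S c j t\<close> \<open>c = b\<close> by auto
        then show ?thesis using uv \<open>u = S b i s\<close> \<open>v = S c j t\<close> \<open>c = b\<close> True
            LE[of i m s t b] by simp
      next
        case False
        then show ?thesis using uv \<open>u = S b i s\<close> \<open>v = S c j t\<close> \<open>c = b\<close> m3
            LB[of i m j b s t] by simp
      qed
    next
      case False
      then have c: "c = (\<not> b)" by auto
      show ?thesis
      proof (cases "(s = t) = (i \<noteq> j)")
        case True
        then show ?thesis using uv \<open>u = S b i s\<close> \<open>v = S c j t\<close> c
            LC[of i m j s t b] by simp
      next
        case False
        then show ?thesis using uv \<open>u = S b i s\<close> \<open>v = S c j t\<close> c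
            LF[of i m j s t b] by simp
      qed
    qed
  qed
next
  case (P j)
  then show ?thesis using uv m3 LD[of v j m] by (simp add: Int_commute)
qed

lemma polished: assumes "m \<ge> 3" shows "intersection_polished (2*m) (VV m) (EE m)"
  unfolding intersection_polished_def
proof (intro ext)
  fix u v
  show "Pk_adj (2*m) (VV m) (EE m) u v = EE m u v"
  proof (cases "u \<in> VV m \<and> v \<in> VV m \<and> u \<noteq> v")
    case True
    then show ?thesis using key[OF assms, of u v] unfolding Pk_adj_def EE_def by auto
  next
    case False
    moreover have "\<not> adj u u" by (cases u) auto
    ultimately show ?thesis unfolding Pk_adj_def EE_def by auto
  qed
qed

lemma adj_sym: "adj u v = adj v u"
  by (cases u; cases v) auto

lemma simple: "simple_graph (VV m) (EE m)"
  unfolding simple_graph_def EE_def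
proof (intro conjI allI impI)
  fix v show "\<not> (v \<in> VV m \<and> v \<in> VV m \<and> adj v v)" by (cases v) auto
qed (auto simp: adj_sym)


lemma max_ext:
  assumes fin: "finite V" and K: "is_clique V E K"
  shows "\<exists>M. is_maximal_clique V E M \<and> K \<subseteq> M"
proof -
  define SS where "SS = {D. is_clique V E D \<and> K \<subseteq> D}"
  have finSS: "finite SS" using fin
    by (rule finite_subset[rotated, OF finite_Pow_iff[THEN iffD2]])
       (auto simp: SS_def is_clique_def)
  have "K \<in> SS" using K by (simp add: SS_def)
  then have ne: "card ` SS \<noteq> {}" by auto
  have "Max (card ` SS) \<in> card ` SS" using finSS ne by (intro Max_in) auto
  then obtain D where D: "D \<in> SS" "card D = Max (card ` SS)" by auto
  have "is_maximal_clique V E D"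
    unfolding is_maximal_clique_def
  proof (intro conjI notI)
    show "is_clique V E D" using D by (simp add: SS_def)
  next
    assume "\<exists>D'. is_clique V E D' \<and> D \<subset> D'"
    then obtain D' where D': "is_clique V E D'" "D \<subset> D'" by auto
    then have "D' \<in> SS" using D by (auto simp: SS_def)
    then have "card D' \<le> card D" using D finSS by simp
    moreover have "finite D'" using D' fin by (auto simp: is_clique_def intro: finite_subset)
    then have "card D < card D'" using D' by (intro psubset_card_mono)
    ultimately show False by simp
  qed
  then show ?thesis using D by (auto simp: SS_def)
qed

definition KA :: "nat \<Rightarrow> nat set \<Rightarrow> vert set" where
  "KA m A = insert Z (Tr m True (\<lambda>j. j \<in> A))"

lemma KA_clique: "is_clique (VV m) (EE m) (KA m A)"
  unfolding is_clique_def KA_def EE_def by auto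

lemma many_cliques: "card {C. is_maximal_clique (VV m) (EE m) C} \<ge> 2 ^ m"
proof -
  define F where "F A = (SOME M. is_maximal_clique (VV m) (EE m) M \<and> KA m A \<subseteq> M)" for A
  have FA: "is_maximal_clique (VV m) (EE m) (F A) \<and> KA m A \<subseteq> F A" for A
    unfolding F_def by (rule someI_ex) (rule max_ext[OF finite_VV KA_clique])
  have rec: "A = {i. i < m \<and> S True i True \<in> F A}" if "A \<subseteq> {..<m}" for A
  proof (intro set_eqI iffI)
    fix i assume "i \<in> A"
    moreover have "S True i True \<in> Tr m True (\<lambda>j. j \<in> A)" using \<open>i \<in> A\<close> that
      by (simp only: mem_Tr) (rule exI[of _ i], auto)
    ultimately show "i \<in> {i. i < m \<and> S True i True \<in> F A}" using that FA[of A]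
      unfolding KA_def by auto
  next
    fix i assume "i \<in> {i. i < m \<and> S True i True \<in> F A}"
    then have i: "i < m" "S True i True \<in> F A" by auto
    show "i \<in> A"
    proof (rule ccontr)
      assume "i \<notin> A"
      then have "S True i False \<in> F A" using FA[of A] i unfolding KA_def by auto
      then have "EE m (S True i True) (S True i False)"
        using FA[of A] i unfolding is_maximal_clique_def is_clique_def by auto
      then show False unfolding EE_def by simp
    qed
  qed
  have inj: "inj_on F (Pow {..<m})"
  proof (rule inj_onI)
    fix A B assume "A \<in> Pow {..<m}" "B \<in> Pow {..<m}" "F A = F B"
    then show "A = B" using rec[of A] rec[of B] by auto
  qed
  have sub: "F ` Pow {..<m} \<subseteq> {C. is_maximal_clique (VV m) (EE m) C}" using FA by auto
  have fin: "finite {C. is_maximal_clique (VV m) (EE m) C}"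
    by (rule finite_subset[of _ "Pow (VV m)"])
       (auto simp: is_maximal_clique_def is_clique_def)
  have "card (Pow {..<m}) \<le> card {C. is_maximal_clique (VV m) (EE m) C}"
    by (rule card_inj_on_le[OF inj sub fin])
  then show ?thesis by (simp add: card_Pow)
qed


definition mapE :: "('a \<Rightarrow> 'b) \<Rightarrow> ('a \<Rightarrow> 'a \<Rightarrow> bool) \<Rightarrow> 'b \<Rightarrow> 'b \<Rightarrow> bool" where
  "mapE g E x y \<longleftrightarrow> (\<exists>u v. x = g u \<and> y = g v \<and> E u v)"

lemma mapE_g: "inj g \<Longrightarrow> mapE g E (g u) (g v) = E u v"
  unfolding mapE_def by (auto dest: injD)

lemma T1: assumes inj: "inj g" and sg: "simple_graph V E" shows "simple_graph (g ` V) (mapE g E)"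
proof -
  have a: "finite (g ` V)" using sg by (simp add: simple_graph_def)
  have b: "x \<in> g ` V \<and> y \<in> g ` V" if h: "mapE g E x y" for x y
  proof -
    obtain u v where "x = g u" "y = g v" "E u v" using h unfolding mapE_def by blast
    then show ?thesis using sg by (auto simp: simple_graph_def)
  qed
  have c: "mapE g E y x" if h: "mapE g E x y" for x y
  proof -
    obtain u v where "x = g u" "y = g v" "E u v" using h unfolding mapE_def by blast
    then show ?thesis using sg unfolding simple_graph_def mapE_def by blast
  qed
  have d: "\<not> mapE g E x x" for x
  proof
    assume "mapE g E x x"
    then obtain u v where "x = g u" "x = g v" "E u v" unfolding mapE_def by blast
    then have "u = v" using inj by (auto dest: injD)
    then show False using sg \<open>E u v\<close> by (auto simp: simple_graph_def)
  qed
  show ?thesis unfolding simple_graph_def using a b c d by blast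
qed

lemma T2: assumes "inj g"
  shows "closed_nbhd (g ` V) (mapE g E) (g u) = g ` closed_nbhd V E u"
  using assms unfolding closed_nbhd_def by (auto simp: mapE_g)

lemma T3: assumes "inj g" "intersection_polished k V E"
  shows "intersection_polished k (g ` V) (mapE g E)"
  unfolding intersection_polished_def
proof (intro ext)
  fix x y
  show "Pk_adj k (g ` V) (mapE g E) x y = mapE g E x y"
  proof (cases "x \<in> range g \<and> y \<in> range g")
    case True
    then obtain u v where uv: "x = g u" "y = g v" by auto
    have "card (closed_nbhd (g ` V) (mapE g E) (g u) \<inter> closed_nbhd (g ` V) (mapE g E) (g v))
        = card (closed_nbhd V E u \<inter> closed_nbhd V E v)"
      using assms(1) by (simp add: T2 image_Int[symmetric] card_image inj_on_subset)
    moreover have "(g u \<in> g ` V) = (u \<in> V)" "(g v \<in> g ` V) = (v \<in> V)" "(g u = g v) = (u = v)"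
      using assms(1) by (auto dest: injD)
    ultimately have "Pk_adj k (g ` V) (mapE g E) (g u) (g v) = Pk_adj k V E u v"
      unfolding Pk_adj_def by simp
    also have "\<dots> = E u v" using assms(2) unfolding intersection_polished_def by simp
    finally show ?thesis using uv assms(1) by (simp add: mapE_g)
  next
    case False
    then show ?thesis unfolding Pk_adj_def mapE_def by auto
  qed
qed

lemma T4: assumes inj: "inj g" and mc: "is_maximal_clique V E C"
  shows "is_maximal_clique (g ` V) (mapE g E) (g ` C)"
proof -
  have cl: "is_clique V E C" and nomax: "\<nexists>D. is_clique V E D \<and> C \<subset> D"
    using mc unfolding is_maximal_clique_def by auto
  have CV: "C \<subseteq> V" using cl unfolding is_clique_def by blast
  have c1: "is_clique (g ` V) (mapE g E) (g ` C)"
    unfolding is_clique_def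
  proof (intro conjI ballI impI)
    show "g ` C \<subseteq> g ` V" using CV by blast
  next
    fix x y assume "x \<in> g ` C" "y \<in> g ` C" "x \<noteq> y"
    then obtain u v where "u \<in> C" "v \<in> C" "x = g u" "y = g v" "u \<noteq> v" by blast
    then have "E u v" using cl unfolding is_clique_def by blast
    then show "mapE g E x y" unfolding mapE_def using \<open>x = g u\<close> \<open>y = g v\<close> by blast
  qed
  have c2: False if D: "is_clique (g ` V) (mapE g E) D" "g ` C \<subset> D" for D
  proof -
    define D0 where "D0 = {u \<in> V. g u \<in> D}"
    have DsV: "D \<subseteq> g ` V" using D(1) unfolding is_clique_def by blast
    have DD: "D = g ` D0"
    proof
      show "D \<subseteq> g ` D0" using DsV unfolding D0_def by blast
      show "g ` D0 \<subseteq> D" unfolding D0_def by blast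
    qed
    have "is_clique V E D0"
      unfolding is_clique_def
    proof (intro conjI ballI impI)
      show "D0 \<subseteq> V" unfolding D0_def by blast
    next
      fix u v assume uv: "u \<in> D0" "v \<in> D0" "u \<noteq> v"
      then have "g u \<noteq> g v" using inj by (metis injD)
      moreover have "g u \<in> D" "g v \<in> D" using uv unfolding D0_def by auto
      ultimately have "mapE g E (g u) (g v)" using D(1) unfolding is_clique_def by blast
      then show "E u v" using inj by (simp add: mapE_g)
    qed
    moreover have "C \<subseteq> D0" using D(2) CV unfolding D0_def by blast
    moreover have "C \<noteq> D0" using D(2) DD by blast
    ultimately show False using nomax by blast
  qed
  show ?thesis unfolding is_maximal_clique_def using c1 c2 by blast
qed

lemma T5: assumes "inj g" "finite V"
  shows "card {C. is_maximal_clique V E C} \<le> card {C. is_maximal_clique (g ` V) (mapE g E) C}"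
proof (rule card_inj_on_le)
  show "inj_on ((`) g) {C. is_maximal_clique V E C}"
    using assms(1) by (auto intro!: inj_onI simp: inj_image_eq_iff)
  show "(`) g ` {C. is_maximal_clique V E C} \<subseteq> {C. is_maximal_clique (g ` V) (mapE g E) C}"
    using T4[OF assms(1)] by auto
  show "finite {C. is_maximal_clique (g ` V) (mapE g E) C}"
    by (rule finite_subset[of _ "Pow (g ` V)"])
       (auto simp: is_maximal_clique_def is_clique_def assms(2))
qed

theorem theorem4:
  fixes n :: nat
  assumes "even n" and "n \<ge> 6"
  shows "\<exists>(V :: nat set) E. simple_graph V E \<and> intersection_polished n V E \<and>
           card V = n\<^sup>2 div 4 + 3 * n div 2 \<and>
           card {C. is_maximal_clique V E C} \<ge> 2 ^ (n div 2)"
proof -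
  obtain m where n: "n = 2*m" using assms(1) by (auto elim: evenE)
  have m3: "m \<ge> 3" using assms(2) n by simp
  have inj: "inj (to_nat :: vert \<Rightarrow> nat)" by (rule inj_to_nat)
  let ?V = "to_nat ` VV m"
  let ?E = "mapE to_nat (EE m)"
  have "simple_graph ?V ?E" by (rule T1[OF inj simple])
  moreover have "intersection_polished n ?V ?E"
    using T3[OF inj polished[OF m3]] n by simp
  moreover have "card ?V = n\<^sup>2 div 4 + 3 * n div 2"
  proof -
    have "card ?V = m*m + 3*m" using card_VV[of m] m3 inj
      by (simp add: card_image inj_on_subset)
    moreover have "n\<^sup>2 div 4 + 3 * n div 2 = m*m + 3*m" using n
      by (simp add: power2_eq_square)
    ultimately show ?thesis by simp
  qed
  moreover have "card {C. is_maximal_clique ?V ?E C} \<ge> 2 ^ (n div 2)"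
    using T5[OF inj finite_VV, of m "EE m"] many_cliques[of m] n by simp
  ultimately show ?thesis by blast
qed


end
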